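(* Let $A \in \mathbb{R}_+^{m\times n}$ be a matrix with nonnegative entries, let $y \in \mathbb{Z}_+^m$, let $\beta>0$, and define $F(f) = \mathbb{1}^T A f - \sum_{i=1}^m y_i \log(e_i^T A f + \beta)$ for $f \in \mathbb{R}_+^n$, where $\mathbb{1}$ is the all-ones vector in $\mathbb{R}^m$ and $e_i$ is the $i$-th canonical basis vector. Then $F$ is Lipschitz continuously differentiable on $\mathbb{R}_+^n$, with the Lipschitz constant $L$ of $\nabla F$ on $\mathbb{R}_+^n$ satisfying $$L \le \frac{\max(y)}{\beta^2}\,\|A\|_2^2 \le \frac{\max(y)}{\beta^2}\,\max(A^T\mathbb{1})\,\max(A\mathbb{1}),$$ where $\max(v)$ denotes the largest entry of a vector $v$ (and in $A^T\mathbb{1}$ the vector $\mathbb{1}$ is the all-ones vector of $\mathbb{R}^m$, in $A\mathbb{1}$ of $\mathbb{R}^n$).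
   Context: $\|A\|_2$ denotes the spectral norm of $A$. $F$ is the negative Poisson log-likelihood (up to constants) with a small offset $\beta$. *)

theory Defs
  imports "HOL-Analysis.Analysis"
begin

definition nonneg_orthant :: "(real ^ 'n) set" where
  "nonneg_orthant = {f. \<forall>j. 0 \<le> f $ j}"

definition ones_vec :: "real ^ 'k" where
  "ones_vec = (\<chi> i. 1)"

definition poisson_F :: "real ^ 'n ^ 'm \<Rightarrow> nat ^ 'm \<Rightarrow> real \<Rightarrow> real ^ 'n \<Rightarrow> real" where
  "poisson_F A y \<beta> f =
     ones_vec \<bullet> (A *v f) - (\<Sum>i\<in>UNIV. real (y $ i) * ln ((A *v f) $ i + \<beta>))"

definition spectral_norm :: "real ^ 'n ^ 'm \<Rightarrow> real" where
  "spectral_norm A = onorm (\<lambda>x. A *v x)"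

definition max_entry :: "real ^ 'k \<Rightarrow> real" where
  "max_entry v = Max (range (\<lambda>i. v $ i))"

definition lipschitz_const :: "'a::metric_space set \<Rightarrow> ('a \<Rightarrow> 'b::metric_space) \<Rightarrow> real" where
  "lipschitz_const S g = Inf {K. K-lipschitz_on S g}"

end

theory Submission
  imports Defs
begin

lemma wcs:
  fixes a x :: "'j::finite \<Rightarrow> real"
  assumes "\<And>j. 0 \<le> a j"
  shows "(\<Sum>j\<in>UNIV. a j * x j)\<^sup>2 \<le> (\<Sum>j\<in>UNIV. a j) * (\<Sum>j\<in>UNIV. a j * (x j)\<^sup>2)"
proof -
  have "(\<Sum>j\<in>UNIV. a j * x j)\<^sup>2 = (\<Sum>j\<in>UNIV. sqrt (a j) * (sqrt (a j) * x j))\<^sup>2"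
    using assms by (simp add: mult.assoc[symmetric])
  also have "\<dots> \<le> (\<Sum>j\<in>UNIV. (sqrt (a j))\<^sup>2) * (\<Sum>j\<in>UNIV. (sqrt (a j) * x j)\<^sup>2)"
    by (rule Cauchy_Schwarz_ineq_sum)
  also have "\<dots> = (\<Sum>j\<in>UNIV. a j) * (\<Sum>j\<in>UNIV. a j * (x j)\<^sup>2)"
    using assms by (simp add: power_mult_distrib)
  finally show ?thesis .
qed

lemma max_entry_ge: "v $ i \<le> max_entry v"
  unfolding max_entry_def by (rule Max_ge) auto

lemma schur:
  fixes A :: "real ^ 'n ^ 'm"
  assumes A: "\<forall>i j. 0 \<le> A $ i $ j"
  shows "(norm (A *v x))\<^sup>2 \<le> max_entry (transpose A *v (ones_vec :: real ^ 'm)) * max_entry (A *v (ones_vec :: real ^ 'n)) * (norm x)\<^sup>2"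
proof -
  let ?R = "max_entry (A *v (ones_vec :: real ^ 'n))"
  let ?C = "max_entry (transpose A *v (ones_vec :: real ^ 'm))"
  have row: "(\<Sum>j\<in>UNIV. A$i$j) \<le> ?R" for i
    using max_entry_ge[of "A *v (ones_vec :: real ^ 'n)" i]
    by (simp add: matrix_vector_mult_def ones_vec_def)
  have col: "(\<Sum>i\<in>UNIV. A$i$j) \<le> ?C" for j
    using max_entry_ge[of "transpose A *v (ones_vec :: real ^ 'm)" j]
    by (simp add: matrix_vector_mult_def ones_vec_def transpose_def)
  have R0: "0 \<le> ?R" using row[of undefined] A by (meson order_trans sum_nonneg)
  have nx: "(norm x)\<^sup>2 = (\<Sum>j\<in>UNIV. (x$j)\<^sup>2)"
    by (simp only: power2_norm_eq_inner) (simp only: inner_vec_def inner_real_def power2_eq_square)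
  have "(norm (A *v x))\<^sup>2 = (\<Sum>i\<in>UNIV. (\<Sum>j\<in>UNIV. A$i$j * x$j)\<^sup>2)"
    by (simp only: power2_norm_eq_inner) (simp add: inner_vec_def matrix_vector_mult_def power2_eq_square)
  also have "\<dots> \<le> (\<Sum>i\<in>UNIV. ?R * (\<Sum>j\<in>UNIV. A$i$j * (x$j)\<^sup>2))"
  proof (rule sum_mono)
    fix i
    have "(\<Sum>j\<in>UNIV. A$i$j * x$j)\<^sup>2 \<le> (\<Sum>j\<in>UNIV. A$i$j) * (\<Sum>j\<in>UNIV. A$i$j * (x$j)\<^sup>2)"
      using wcs[of "\<lambda>j. A$i$j" "\<lambda>j. x$j"] A by simp
    also have "\<dots> \<le> ?R * (\<Sum>j\<in>UNIV. A$i$j * (x$j)\<^sup>2)"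
      by (rule mult_right_mono[OF row]) (simp add: A sum_nonneg)
    finally show "(\<Sum>j\<in>UNIV. A$i$j * x$j)\<^sup>2 \<le> ?R * (\<Sum>j\<in>UNIV. A$i$j * (x$j)\<^sup>2)" .
  qed
  also have "\<dots> = ?R * (\<Sum>i\<in>UNIV. \<Sum>j\<in>UNIV. A$i$j * (x$j)\<^sup>2)"
    by (simp only: sum_distrib_left)
  also have "\<dots> = ?R * (\<Sum>j\<in>UNIV. \<Sum>i\<in>UNIV. A$i$j * (x$j)\<^sup>2)"
    by (subst sum.swap) (rule refl)
  also have "\<dots> = ?R * (\<Sum>j\<in>UNIV. (\<Sum>i\<in>UNIV. A$i$j) * (x$j)\<^sup>2)"
    by (simp only: sum_distrib_right)
  also have "\<dots> \<le> ?R * (\<Sum>j\<in>UNIV. ?C * (x$j)\<^sup>2)"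
    by (intro mult_left_mono[OF _ R0] sum_mono mult_right_mono[OF col]) simp
  also have "\<dots> = ?R * (?C * (\<Sum>j\<in>UNIV. (x$j)\<^sup>2))"
    by (simp only: sum_distrib_left)
  also have "\<dots> = ?C * ?R * (norm x)\<^sup>2"
    by (simp only: nx mult_ac)
  finally show ?thesis .
qed

lemma onorm_A: "norm (A *v x) \<le> spectral_norm A * norm (x::real^'n)"
  unfolding spectral_norm_def
  by (rule onorm) (rule matrix_vector_mul_bounded_linear)

lemma spec_nonneg: "0 \<le> spectral_norm (A::real^'n^'m)"
  unfolding spectral_norm_def by (rule onorm_pos_le) (rule matrix_vector_mul_bounded_linear)

lemma transpose_bound: "norm (transpose A *v w) \<le> spectral_norm (A::real^'n^'m) * norm w"
proof -
  let ?v = "transpose A *v w"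
  have "(norm ?v)\<^sup>2 = w \<bullet> (A *v ?v)"
    by (simp add: power2_norm_eq_inner dot_lmul_matrix[symmetric])
  also have "\<dots> \<le> norm w * norm (A *v ?v)" by (rule Cauchy_Schwarz_ineq2[THEN order_trans[OF abs_ge_self]])
  also have "\<dots> \<le> norm w * (spectral_norm A * norm ?v)"
    by (rule mult_left_mono[OF onorm_A]) simp
  finally have "norm ?v * norm ?v \<le> (spectral_norm A * norm w) * norm ?v"
    by (simp add: power2_eq_square mult_ac)
  then show ?thesis
    by (cases "norm ?v = 0") (auto simp: mult_le_cancel_right spec_nonneg)
qed


lemma comp_norm_le:
  fixes a b :: "real ^ 'k"
  assumes "\<And>i. \<bar>a $ i\<bar> \<le> c * \<bar>b $ i\<bar>" "0 \<le> c"
  shows "norm a \<le> c * norm b"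
proof -
  have "norm a = L2_set (\<lambda>i. \<bar>a $ i\<bar>) UNIV" by (simp add: norm_vec_def)
  also have "\<dots> \<le> L2_set (\<lambda>i. c * \<bar>b $ i\<bar>) UNIV"
    by (rule L2_set_mono) (use assms in auto)
  also have "\<dots> = c * L2_set (\<lambda>i. \<bar>b $ i\<bar>) UNIV"
    by (rule L2_set_right_distrib[symmetric, OF assms(2)])
  also have "\<dots> = c * norm b" by (simp add: norm_vec_def)
  finally show ?thesis .
qed

lemma Av_nonneg:
  fixes A :: "real ^ 'n ^ 'm"
  assumes "\<forall>i j. 0 \<le> A $ i $ j" "f \<in> nonneg_orthant"
  shows "0 \<le> (A *v f) $ i"
  using assms unfolding nonneg_orthant_def
  by (auto simp: matrix_vector_mult_def intro!: sum_nonneg)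

lemma scalar_bound:
  fixes u v \<beta> :: real
  assumes "0 \<le> u" "0 \<le> v" "0 < \<beta>"
  shows "\<bar>1 / (u + \<beta>) - 1 / (v + \<beta>)\<bar> \<le> \<bar>u - v\<bar> / \<beta>\<^sup>2"
proof -
  have e: "1 / (u + \<beta>) - 1 / (v + \<beta>) = (v - u) / ((u+\<beta>)*(v+\<beta>))"
    using assms by (simp add: field_simps)
  have "\<beta>\<^sup>2 \<le> (u+\<beta>)*(v+\<beta>)" using assms
    by (simp add: power2_eq_square mult_mono)
  then have "\<bar>v - u\<bar> / ((u+\<beta>)*(v+\<beta>)) \<le> \<bar>v - u\<bar> / \<beta>\<^sup>2"
    using assms by (intro divide_left_mono) auto
  then show ?thesis using assms by (simp add: e abs_divide abs_minus_commute)
qed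

theorem lemma1:
  fixes A :: "real ^ 'n ^ 'm" and y :: "nat ^ 'm" and \<beta> :: real
  assumes A_nonneg: "\<forall>i j. 0 \<le> A $ i $ j"
    and beta_pos: "0 < \<beta>"
  shows "\<exists>G :: real ^ 'n \<Rightarrow> real ^ 'n.
           (\<forall>f\<in>nonneg_orthant. (poisson_F A y \<beta> has_derivative (\<lambda>h. G f \<bullet> h)) (at f))
         \<and> (\<exists>K. K-lipschitz_on nonneg_orthant G)
         \<and> lipschitz_const nonneg_orthant G
              \<le> real (Max (range (\<lambda>i. y $ i))) / \<beta>\<^sup>2 * (spectral_norm A)\<^sup>2
         \<and> real (Max (range (\<lambda>i. y $ i))) / \<beta>\<^sup>2 * (spectral_norm A)\<^sup>2
              \<le> real (Max (range (\<lambda>i. y $ i))) / \<beta>\<^sup>2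
                 * max_entry (transpose A *v (ones_vec :: real ^ 'm))
                 * max_entry (A *v (ones_vec :: real ^ 'n))"
proof -
  define M where "M = real (Max (range (\<lambda>i. y $ i)))"
  define S where "S = spectral_norm A"
  define w where "w = (\<lambda>f. (\<chi> i. 1 - real (y$i) / ((A *v f)$i + \<beta>)) :: real ^ 'm)"
  define G where "G = (\<lambda>f. transpose A *v w f)"
  have yM: "real (y$i) \<le> M" for i
    unfolding M_def by (simp add: Max_ge)
  have M0: "0 \<le> M" unfolding M_def by simp
  have S0: "0 \<le> S" unfolding S_def by (rule spec_nonneg)
  define K where "K = M / \<beta>\<^sup>2 * S\<^sup>2"
  have K0: "0 \<le> K" unfolding K_def using M0 by simp
  have deriv: "(poisson_F A y \<beta> has_derivative (\<lambda>h. G f \<bullet> h)) (at f)" if f: "f \<in> nonneg_orthant" for f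
  proof -
    have pos: "0 < (A *v f)$i + \<beta>" for i using Av_nonneg[OF A_nonneg f, of i] beta_pos by simp
    have l1: "((\<lambda>f. ones_vec \<bullet> (A *v f)) has_derivative (\<lambda>h. ones_vec \<bullet> (A *v h))) (at f)"
      by (rule bounded_linear_imp_has_derivative, rule bounded_linear_compose[OF bounded_linear_inner_right matrix_vector_mul_bounded_linear])
    have l2: "((\<lambda>f. (A *v f)$i + \<beta>) has_derivative (\<lambda>h. (A *v h)$i)) (at f)" for i
      by (rule has_derivative_add_const, rule bounded_linear_imp_has_derivative,
          rule bounded_linear_compose[OF bounded_linear_vec_nth matrix_vector_mul_bounded_linear])
    have l3: "((\<lambda>f. ln ((A *v f)$i + \<beta>)) has_derivative (\<lambda>h. (A *v h)$i * inverse ((A *v f)$i + \<beta>))) (at f)" for i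
      by (rule DERIV_compose_FDERIV[OF DERIV_ln[OF pos] l2])
    have D: "(poisson_F A y \<beta> has_derivative
        (\<lambda>h. ones_vec \<bullet> (A *v h) - (\<Sum>i\<in>UNIV. real (y$i) * ((A *v h)$i * inverse ((A *v f)$i + \<beta>))))) (at f)"
      unfolding poisson_F_def[abs_def]
      by (intro has_derivative_diff l1 has_derivative_sum has_derivative_mult_right l3)
    have eq: "G f \<bullet> h = ones_vec \<bullet> (A *v h) - (\<Sum>i\<in>UNIV. real (y$i) * ((A *v h)$i * inverse ((A *v f)$i + \<beta>)))" for h
    proof -
      have "G f \<bullet> h = w f \<bullet> (A *v h)"
        unfolding G_def by (simp add: dot_lmul_matrix)
      also have "\<dots> = (\<Sum>i\<in>UNIV. (1 - real (y$i) / ((A *v f)$i + \<beta>)) * (A *v h)$i)"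
        by (simp add: w_def inner_vec_def)
      also have "\<dots> = ones_vec \<bullet> (A *v h) - (\<Sum>i\<in>UNIV. real (y$i) * ((A *v h)$i * inverse ((A *v f)$i + \<beta>)))"
        by (simp add: ones_vec_def inner_vec_def right_diff_distrib sum_subtractf divide_inverse mult.left_commute mult.commute)
      finally show ?thesis .
    qed
    show ?thesis using D by (simp add: eq)
  qed
  have lip: "K-lipschitz_on nonneg_orthant G"
  proof (rule lipschitz_onI[OF _ K0])
    fix f g :: "real ^ 'n" assume f: "f \<in> nonneg_orthant" and g: "g \<in> nonneg_orthant"
    have wd: "norm (w f - w g) \<le> M / \<beta>\<^sup>2 * norm (A *v (f - g))"
    proof (rule comp_norm_le)
      fix i
      have uf: "0 \<le> (A *v f)$i" and ug: "0 \<le> (A *v g)$i" using Av_nonneg[OF A_nonneg] f g by auto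
      have "(w f - w g)$i = real (y$i) * (1 / ((A *v g)$i + \<beta>) - 1 / ((A *v f)$i + \<beta>))"
        by (simp add: w_def right_diff_distrib)
      then have "\<bar>(w f - w g)$i\<bar> = real (y$i) * \<bar>1 / ((A *v g)$i + \<beta>) - 1 / ((A *v f)$i + \<beta>)\<bar>"
        by (simp add: abs_mult)
      also have "\<dots> \<le> M * (\<bar>(A *v g)$i - (A *v f)$i\<bar> / \<beta>\<^sup>2)"
        by (rule mult_mono[OF yM scalar_bound[OF ug uf beta_pos] M0 abs_ge_zero])
      also have "\<dots> = M / \<beta>\<^sup>2 * \<bar>(A *v (f - g))$i\<bar>"
        by (simp add: matrix_vector_mult_diff_distrib abs_minus_commute)
      finally show "\<bar>(w f - w g)$i\<bar> \<le> M / \<beta>\<^sup>2 * \<bar>(A *v (f - g))$i\<bar>" .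
    qed (use M0 in simp)
    have "dist (G f) (G g) = norm (transpose A *v (w f - w g))"
      by (simp add: G_def dist_norm matrix_vector_mult_diff_distrib)
    also have "\<dots> \<le> S * norm (w f - w g)" unfolding S_def by (rule transpose_bound)
    also have "\<dots> \<le> S * (M / \<beta>\<^sup>2 * norm (A *v (f - g)))" by (rule mult_left_mono[OF wd S0])
    also have "\<dots> \<le> S * (M / \<beta>\<^sup>2 * (S * norm (f - g)))"
      using M0 S0 unfolding S_def by (intro mult_left_mono onorm_A) auto
    also have "\<dots> = K * dist f g" by (simp add: K_def dist_norm power2_eq_square mult_ac)
    finally show "dist (G f) (G g) \<le> K * dist f g" .
  qed
  have lc: "lipschitz_const nonneg_orthant G \<le> K"
    unfolding lipschitz_const_def
    by (rule cInf_lower) (use lip in \<open>auto simp: bdd_below_def lipschitz_on_def\<close>)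
  define C where "C = max_entry (transpose A *v (ones_vec :: real ^ 'm))"
  define R where "R = max_entry (A *v (ones_vec :: real ^ 'n))"
  have C0: "0 \<le> C"
    using max_entry_ge[of "transpose A *v (ones_vec :: real ^ 'm)" undefined] A_nonneg
    unfolding C_def apply (simp add: matrix_vector_mult_def ones_vec_def transpose_def)
    by (meson order_trans sum_nonneg)
  have R0: "0 \<le> R"
    using max_entry_ge[of "A *v (ones_vec :: real ^ 'n)" undefined] A_nonneg
    unfolding R_def apply (simp add: matrix_vector_mult_def ones_vec_def)
    by (meson order_trans sum_nonneg)
  have CR0: "0 \<le> C * R" using C0 R0 by simp
  have Ssq: "S \<le> sqrt (C * R)"
    unfolding S_def spectral_norm_def
  proof (rule onorm_le)
    fix x :: "real ^ 'n"
    have "(norm (A *v x))\<^sup>2 \<le> C * R * (norm x)\<^sup>2" using schur[OF A_nonneg] unfolding C_def R_def by blast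
    then have "sqrt ((norm (A *v x))\<^sup>2) \<le> sqrt (C * R * (norm x)\<^sup>2)" by (rule real_sqrt_le_mono)
    then show "norm (A *v x) \<le> sqrt (C * R) * norm x" by (simp add: real_sqrt_mult)
  qed
  have SCR: "S\<^sup>2 \<le> C * R" using power_mono[OF Ssq S0, of 2] CR0 by simp
  have last: "M / \<beta>\<^sup>2 * S\<^sup>2 \<le> M / \<beta>\<^sup>2 * C * R"
    using mult_left_mono[OF SCR, of "M / \<beta>\<^sup>2"] M0 by (simp add: mult_ac)
  show ?thesis
  proof (intro exI[of _ G] conjI ballI exI[of _ K])
    show "\<And>f. f \<in> nonneg_orthant \<Longrightarrow> (poisson_F A y \<beta> has_derivative (\<lambda>h. G f \<bullet> h)) (at f)" by (rule deriv)
  qed (use lip lc last in \<open>simp_all only: K_def M_def S_def C_def R_def\<close>)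
qed

end
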